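(* Let $\mathbf{A}\in\mathbb{R}^{M\times N}$, $\mathbf{Y}\in\mathbb{R}^{M\times L}$, and let $(\mathbf{g}(t),\mathbf{V}(t))\in\mathbb{R}^N\times\mathbb{R}^{N\times L}$, $t\ge 0$, evolve under the continuous gradient flow of $\mathcal{L}(\mathbf{g},\mathbf{V})=\Vert\mathbf{Y}-\mathbf{A}((\mathbf{g}^{\odot 2}\mathbf{1}_L)\odot\mathbf{V})\Vert_F^2$. Then for every $t\ge0$: (1) (global balancedness) $\frac12\Vert\mathbf{g}(t)\Vert_2^2-\Vert\mathbf{V}(t)\Vert_F^2=\frac12\Vert\mathbf{g}(0)\Vert_2^2-\Vert\mathbf{V}(0)\Vert_F^2$; (2) (row-wise balancedness) for each $i\in[N]$, $\frac12 g_i^2(t)-\sum_{j\in[L]}V_{ij}^2(t)=\frac12 g_i^2(0)-\sum_{j\in[L]}V_{ij}^2(0)$.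
   Context: $\odot$ denotes the entrywise product, $\mathbf{g}^{\odot2}$ the entrywise square, $\mathbf{1}_L$ the $1\times L$ all-ones row vector, so the matrix $(\mathbf{g}^{\odot 2}\mathbf{1}_L)\odot\mathbf{V}$ has entries $g_i^2V_{ij}$. Gradient flow means $\frac{d}{dt}g_l(t)=-\frac{\partial\mathcal{L}}{\partial g_l}(\mathbf g(t),\mathbf V(t))$ and $\frac{d}{dt}V_{lm}(t)=-\frac{\partial\mathcal{L}}{\partial V_{lm}}(\mathbf g(t),\mathbf V(t))$ for all $l\in[N]$, $m\in[L]$. *)

theory Defs
  imports "HOL-Analysis.Analysis"
begin

definition loss :: "real^'n^'m \<Rightarrow> real^'l^'m \<Rightarrow> real^'n \<Rightarrow> real^'l^'n \<Rightarrow> real" where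
  "loss A Y g V = (\<Sum>i\<in>UNIV. \<Sum>j\<in>UNIV.
      (Y $ i $ j - (\<Sum>k\<in>UNIV. A $ i $ k * ((g $ k)^2 * V $ k $ j)))^2)"

definition upd_vec :: "real^'n \<Rightarrow> 'n \<Rightarrow> real \<Rightarrow> real^'n" where
  "upd_vec x l s = (\<chi> k. if k = l then s else x $ k)"

definition upd_mat :: "real^'l^'n \<Rightarrow> 'n \<Rightarrow> 'l \<Rightarrow> real \<Rightarrow> real^'l^'n" where
  "upd_mat V l m s = (\<chi> k. \<chi> j. if k = l \<and> j = m then s else V $ k $ j)"

definition dloss_g :: "real^'n^'m \<Rightarrow> real^'l^'m \<Rightarrow> real^'n \<Rightarrow> real^'l^'n \<Rightarrow> 'n \<Rightarrow> real" where
  "dloss_g A Y g V l = deriv (\<lambda>s. loss A Y (upd_vec g l s) V) (g $ l)"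

definition dloss_V :: "real^'n^'m \<Rightarrow> real^'l^'m \<Rightarrow> real^'n \<Rightarrow> real^'l^'n \<Rightarrow> 'n \<Rightarrow> 'l \<Rightarrow> real" where
  "dloss_V A Y g V l m = deriv (\<lambda>s. loss A Y g (upd_mat V l m s)) (V $ l $ m)"

end

theory Submission imports Defs begin

definition Rf :: "real^'n^'m \<Rightarrow> real^'l^'m \<Rightarrow> real^'n \<Rightarrow> real^'l^'n \<Rightarrow> 'm \<Rightarrow> 'l \<Rightarrow> real" where
  "Rf A Y g V i j = Y $ i $ j - (\<Sum>k\<in>UNIV. A $ i $ k * ((g $ k)^2 * V $ k $ j))"

lemma dg_has:
  fixes A :: "real^'n^'m" and Y :: "real^'l^'m" and g :: "real^'n" and V :: "real^'l^'n"
  shows "((\<lambda>s. loss A Y (upd_vec g l s) V) has_real_derivative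
     (\<Sum>i\<in>UNIV. \<Sum>j\<in>UNIV. 2 * Rf A Y (upd_vec g l x) V i j * (- (A $ i $ l * (2 * x) * V $ l $ j)))) (at x)"
proof -
  have inner: "((\<lambda>s. \<Sum>k\<in>UNIV. A $ i $ k * ((upd_vec g l s $ k)^2 * V $ k $ j)) has_real_derivative
      A $ i $ l * (2 * x) * V $ l $ j) (at x)" for i j
  proof -
    have "((\<lambda>s. \<Sum>k\<in>UNIV. A $ i $ k * ((upd_vec g l s $ k)^2 * V $ k $ j)) has_real_derivative
      (\<Sum>k\<in>UNIV. A $ i $ k * ((if k = l then 2 * x else 0) * V $ k $ j))) (at x)"
    proof (rule DERIV_sum)
      fix k :: 'n
      show "((\<lambda>s. A $ i $ k * ((upd_vec g l s $ k)^2 * V $ k $ j)) has_real_derivative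
        A $ i $ k * ((if k = l then 2 * x else 0) * V $ k $ j)) (at x)"
      proof (cases "k = l")
        case True
        show ?thesis unfolding upd_vec_def True
          by (simp, auto intro!: derivative_eq_intros)
      next
        case False
        have "(\<lambda>s. A $ i $ k * ((upd_vec g l s $ k)^2 * V $ k $ j)) = (\<lambda>s. A $ i $ k * ((g $ k)^2 * V $ k $ j))"
          using False by (intro ext) (auto simp: upd_vec_def)
        then show ?thesis using False by simp
      qed
    qed
    moreover have "(\<Sum>k\<in>UNIV. A $ i $ k * ((if k = l then 2 * x else 0) * V $ k $ j)) = A $ i $ l * (2 * x) * V $ l $ j"
      by (subst sum.cong[OF refl, where h="\<lambda>k. if k = l then A $ i $ l * (2 * x) * V $ l $ j else 0"]) auto
    ultimately show ?thesis by simp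
  qed
  show ?thesis unfolding loss_def
  proof (rule DERIV_sum, rule DERIV_sum)
    fix i j
    from DERIV_power[OF DERIV_diff[OF DERIV_const[where k="Y $ i $ j"] inner[of i j]], where n=2]
    show "((\<lambda>s. (Y $ i $ j - (\<Sum>k\<in>UNIV. A $ i $ k * ((upd_vec g l s $ k)^2 * V $ k $ j)))^2) has_real_derivative
       2 * Rf A Y (upd_vec g l x) V i j * (- (A $ i $ l * (2 * x) * V $ l $ j))) (at x)"
      by (simp add: Rf_def algebra_simps)
  qed
qed

lemma dV_has:
  fixes A :: "real^'n^'m" and Y :: "real^'l^'m" and g :: "real^'n" and V :: "real^'l^'n"
  shows "((\<lambda>s. loss A Y g (upd_mat V l m s)) has_real_derivative
     (\<Sum>i\<in>UNIV. \<Sum>j\<in>UNIV. 2 * Rf A Y g (upd_mat V l m x) i j * (- (if j = m then A $ i $ l * (g $ l)^2 else 0)))) (at x)"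
proof -
  have inner: "((\<lambda>s. \<Sum>k\<in>UNIV. A $ i $ k * ((g $ k)^2 * upd_mat V l m s $ k $ j)) has_real_derivative
      (if j = m then A $ i $ l * (g $ l)^2 else 0)) (at x)" for i j
  proof -
    have "((\<lambda>s. \<Sum>k\<in>UNIV. A $ i $ k * ((g $ k)^2 * upd_mat V l m s $ k $ j)) has_real_derivative
      (\<Sum>k\<in>UNIV. A $ i $ k * ((g $ k)^2 * (if k = l \<and> j = m then 1 else 0)))) (at x)"
    proof (rule DERIV_sum)
      fix k :: 'n
      show "((\<lambda>s. A $ i $ k * ((g $ k)^2 * upd_mat V l m s $ k $ j)) has_real_derivative
        A $ i $ k * ((g $ k)^2 * (if k = l \<and> j = m then 1 else 0))) (at x)"
      proof (cases "k = l \<and> j = m")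
        case True
        have "(\<lambda>s. A $ i $ k * ((g $ k)^2 * upd_mat V l m s $ k $ j)) = (\<lambda>s. A $ i $ k * ((g $ k)^2 * s))"
          using True by (intro ext) (auto simp: upd_mat_def)
        then show ?thesis using True by (auto intro!: derivative_eq_intros)
      next
        case False
        have "(\<lambda>s. A $ i $ k * ((g $ k)^2 * upd_mat V l m s $ k $ j)) = (\<lambda>s. A $ i $ k * ((g $ k)^2 * V $ k $ j))"
          using False by (intro ext) (auto simp: upd_mat_def)
        then show ?thesis unfolding if_not_P[OF False] by simp
      qed
    qed
    moreover have "(\<Sum>k\<in>UNIV. A $ i $ k * ((g $ k)^2 * (if k = l \<and> j = m then 1 else 0))) = (if j = m then A $ i $ l * (g $ l)^2 else 0)"
      by (subst sum.cong[OF refl, where h="\<lambda>k. if k = l then (if j = m then A $ i $ l * (g $ l)^2 else 0) else 0"]) auto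
    ultimately show ?thesis by simp
  qed
  show ?thesis unfolding loss_def
  proof (rule DERIV_sum, rule DERIV_sum)
    fix i j
    from DERIV_power[OF DERIV_diff[OF DERIV_const[where k="Y $ i $ j"] inner[of i j]], where n=2]
    show "((\<lambda>s. (Y $ i $ j - (\<Sum>k\<in>UNIV. A $ i $ k * ((g $ k)^2 * upd_mat V l m s $ k $ j)))^2) has_real_derivative
       2 * Rf A Y g (upd_mat V l m x) i j * (- (if j = m then A $ i $ l * (g $ l)^2 else 0))) (at x)"
      by (simp add: Rf_def algebra_simps)
  qed
qed


lemma upd_vec_self: "upd_vec g l (g $ l) = g"
  by (simp add: upd_vec_def vec_eq_iff)

lemma upd_mat_self: "upd_mat V l m (V $ l $ m) = V"
  by (simp add: upd_mat_def vec_eq_iff)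

lemma dloss_g_eq:
  fixes A :: "real^'n^'m" and Y :: "real^'l^'m" and g :: "real^'n" and V :: "real^'l^'n"
  shows "dloss_g A Y g V l = - 4 * (g $ l) * (\<Sum>i\<in>UNIV. \<Sum>j\<in>UNIV. Rf A Y g V i j * A $ i $ l * V $ l $ j)"
proof -
  have "dloss_g A Y g V l = (\<Sum>i\<in>UNIV. \<Sum>j\<in>UNIV. 2 * Rf A Y g V i j * (- (A $ i $ l * (2 * g $ l) * V $ l $ j)))"
    unfolding dloss_g_def using DERIV_imp_deriv[OF dg_has[of A Y g l V "g $ l"]] by (simp add: upd_vec_self)
  also have "\<dots> = - 4 * (g $ l) * (\<Sum>i\<in>UNIV. \<Sum>j\<in>UNIV. Rf A Y g V i j * A $ i $ l * V $ l $ j)"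
    by (simp add: sum_distrib_left algebra_simps sum_negf)
  finally show ?thesis .
qed

lemma dloss_V_eq:
  fixes A :: "real^'n^'m" and Y :: "real^'l^'m" and g :: "real^'n" and V :: "real^'l^'n"
  shows "dloss_V A Y g V l m = - 2 * (g $ l)^2 * (\<Sum>i\<in>UNIV. Rf A Y g V i m * A $ i $ l)"
proof -
  have "dloss_V A Y g V l m = (\<Sum>i\<in>UNIV. \<Sum>j\<in>UNIV. 2 * Rf A Y g V i j * (- (if j = m then A $ i $ l * (g $ l)^2 else 0)))"
    unfolding dloss_V_def using DERIV_imp_deriv[OF dV_has[of A Y g V l m "V $ l $ m"]] by (simp add: upd_mat_self)
  also have "\<dots> = (\<Sum>i\<in>UNIV. 2 * Rf A Y g V i m * (- (A $ i $ l * (g $ l)^2)))"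
    by (rule sum.cong[OF refl]) (simp add: if_distrib sum.delta' cong: if_cong)
  also have "\<dots> = - 2 * (g $ l)^2 * (\<Sum>i\<in>UNIV. Rf A Y g V i m * A $ i $ l)"
    by (simp add: sum_distrib_left algebra_simps sum_negf)
  finally show ?thesis .
qed

lemma key_identity:
  fixes A :: "real^'n^'m" and Y :: "real^'l^'m" and g :: "real^'n" and V :: "real^'l^'n"
  shows "g $ l * dloss_g A Y g V l = 2 * (\<Sum>j\<in>UNIV. V $ l $ j * dloss_V A Y g V l j)"
proof -
  have "(\<Sum>j\<in>UNIV. V $ l $ j * dloss_V A Y g V l j)
      = - 2 * (g $ l)^2 * (\<Sum>j\<in>UNIV. \<Sum>i\<in>UNIV. Rf A Y g V i j * A $ i $ l * V $ l $ j)"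
    by (simp add: dloss_V_eq sum_distrib_left sum_distrib_right algebra_simps)
  also have "(\<Sum>j\<in>UNIV. \<Sum>i\<in>UNIV. Rf A Y g V i j * A $ i $ l * V $ l $ j)
      = (\<Sum>i\<in>UNIV. \<Sum>j\<in>UNIV. Rf A Y g V i j * A $ i $ l * V $ l $ j)"
    by (rule sum.swap)
  finally show ?thesis by (simp add: dloss_g_eq power2_eq_square algebra_simps)
qed



theorem lemma5p1:
  fixes A :: "real^'n^'m" and Y :: "real^'l^'m"
    and g :: "real \<Rightarrow> real^'n" and V :: "real \<Rightarrow> real^'l^'n"
  assumes flow_g: "\<And>t l. t \<ge> 0 \<Longrightarrow>
      ((\<lambda>s. g s $ l) has_real_derivative (- dloss_g A Y (g t) (V t) l)) (at t within {0..})"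
    and flow_V: "\<And>t l m. t \<ge> 0 \<Longrightarrow>
      ((\<lambda>s. V s $ l $ m) has_real_derivative (- dloss_V A Y (g t) (V t) l m)) (at t within {0..})"
  shows "\<forall>t\<ge>0.
      (1/2 * (\<Sum>i\<in>UNIV. (g t $ i)^2) - (\<Sum>i\<in>UNIV. \<Sum>j\<in>UNIV. (V t $ i $ j)^2)
        = 1/2 * (\<Sum>i\<in>UNIV. (g 0 $ i)^2) - (\<Sum>i\<in>UNIV. \<Sum>j\<in>UNIV. (V 0 $ i $ j)^2))
    \<and> (\<forall>i. 1/2 * (g t $ i)^2 - (\<Sum>j\<in>UNIV. (V t $ i $ j)^2)
            = 1/2 * (g 0 $ i)^2 - (\<Sum>j\<in>UNIV. (V 0 $ i $ j)^2))"
  proof -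
  have row: "1/2 * (g t $ i)^2 - (\<Sum>j\<in>UNIV. (V t $ i $ j)^2)
            = 1/2 * (g 0 $ i)^2 - (\<Sum>j\<in>UNIV. (V 0 $ i $ j)^2)" if t: "t \<ge> 0" for t i
  proof -
    have "\<exists>c. \<forall>x\<in>{0::real..}. 1/2 * (g x $ i)^2 - (\<Sum>j\<in>UNIV. (V x $ i $ j)^2) = c"
    proof (rule has_field_derivative_zero_constant)
      fix x :: real assume "x \<in> {0..}"
      then have x: "x \<ge> 0" by simp
      have "((\<lambda>s. 1/2 * (g s $ i)^2 - (\<Sum>j\<in>UNIV. (V s $ i $ j)^2)) has_real_derivative
          1/2 * (of_nat 2 * (- dloss_g A Y (g x) (V x) i * (g x $ i) ^ (2 - Suc 0)))
          - (\<Sum>j\<in>UNIV. of_nat 2 * (- dloss_V A Y (g x) (V x) i j * (V x $ i $ j) ^ (2 - Suc 0))))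
          (at x within {0..})"
        by (intro DERIV_diff DERIV_cmult DERIV_sum DERIV_power flow_g[OF x] flow_V[OF x])
      moreover have "1/2 * (of_nat 2 * (- dloss_g A Y (g x) (V x) i * (g x $ i) ^ (2 - Suc 0)))
          - (\<Sum>j\<in>UNIV. of_nat 2 * (- dloss_V A Y (g x) (V x) i j * (V x $ i $ j) ^ (2 - Suc 0))) = 0"
        using key_identity[of "g x" i A Y "V x"]
        by (simp add: sum_negf sum_distrib_left algebra_simps)
      ultimately show "((\<lambda>s. 1/2 * (g s $ i)^2 - (\<Sum>j\<in>UNIV. (V s $ i $ j)^2)) has_real_derivative 0)
          (at x within {0..})" by simp
    qed simp
    then obtain c where "\<forall>x\<in>{0::real..}. 1/2 * (g x $ i)^2 - (\<Sum>j\<in>UNIV. (V x $ i $ j)^2) = c" by blast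
    then show ?thesis using t by auto
  qed
  show ?thesis
  proof (rule allI, rule impI, rule conjI)
    fix t :: real assume t: "t \<ge> 0"
    have "(\<Sum>i\<in>UNIV. 1/2 * (g t $ i)^2 - (\<Sum>j\<in>UNIV. (V t $ i $ j)^2))
        = (\<Sum>i\<in>UNIV. 1/2 * (g 0 $ i)^2 - (\<Sum>j\<in>UNIV. (V 0 $ i $ j)^2))"
      using row[OF t] by simp
    then show "1/2 * (\<Sum>i\<in>UNIV. (g t $ i)^2) - (\<Sum>i\<in>UNIV. \<Sum>j\<in>UNIV. (V t $ i $ j)^2)
        = 1/2 * (\<Sum>i\<in>UNIV. (g 0 $ i)^2) - (\<Sum>i\<in>UNIV. \<Sum>j\<in>UNIV. (V 0 $ i $ j)^2)"
      by (simp add: sum_subtractf sum_distrib_left)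
    show "\<forall>i. 1/2 * (g t $ i)^2 - (\<Sum>j\<in>UNIV. (V t $ i $ j)^2)
            = 1/2 * (g 0 $ i)^2 - (\<Sum>j\<in>UNIV. (V 0 $ i $ j)^2)" using row[OF t] by blast
  qed
qed

end
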